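(* Let $\lambda,\mu$ be partitions with at most $m$ parts, each at most $m$, such that $\mu\subset\lambda^c$ and the skew partition $\lambda^c/\mu$ is symmetric about the main diagonal. If $\lambda^c/\mu$ has an odd number of boxes strictly above its main diagonal, then its sign-imbalance is zero.
   Context: Partitions are identified with Young diagrams (sets of boxes $(i,j)$, row $i$, column $j$, with $\lambda_i$ boxes in row $i$). The complement is $\lambda^c_i=m-\lambda_{m+1-i}$ for $i=1,\dots,m$; $\mu\subset\lambda^c$ means $\mu_i\le\lambda^c_i$ for all $i$, and $\lambda^c/\mu$ is the set of boxes of $\lambda^c$ not in $\mu$. It is symmetric if invariant under $(i,j)\mapsto(j,i)$; a box is above the main diagonal if $j>i$. Partially order the boxes by letting each box be covered by its neighbors immediately to the right and immediately below; a linear extension (standard Young tableau) of shape $\lambda^c/\mu$ with $N$ boxes is a bijection from the boxes to $\{1,\dots,N\}$ increasing along this order. Fixing one linear extension $T_0$, each linear extension $T$ gives a permutation $T\circ T_0^{-1}$ of $\{1,\dots,N\}$; the sign-imbalance is the absolute value of the sum of the signs of these permutations over all linear extensions $T$. *)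

theory Defs
  imports "HOL-Combinatorics.Combinatorics"
begin

text \<open>A partition with at most m parts, each at most m, is encoded as a function
  nat to nat, its i-th part being lam i for i = 1..m (the value at 0 is irrelevant).\<close>
definition partition_in_box :: "nat \<Rightarrow> (nat \<Rightarrow> nat) \<Rightarrow> bool" where
  "partition_in_box m lam \<longleftrightarrow>
     (\<forall>i j. 1 \<le> i \<longrightarrow> i \<le> j \<longrightarrow> lam j \<le> lam i) \<and>
     (\<forall>i. lam i \<le> m) \<and> (\<forall>i. m < i \<longrightarrow> lam i = 0)"

definition part_compl :: "nat \<Rightarrow> (nat \<Rightarrow> nat) \<Rightarrow> nat \<Rightarrow> nat" where
  "part_compl m lam i = (if 1 \<le> i \<and> i \<le> m then m - lam (m + 1 - i) else 0)"

definition part_subset :: "nat \<Rightarrow> (nat \<Rightarrow> nat) \<Rightarrow> (nat \<Rightarrow> nat) \<Rightarrow> bool" where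
  "part_subset m mu nu \<longleftrightarrow> (\<forall>i\<in>{1..m}. mu i \<le> nu i)"

definition skew_boxes :: "nat \<Rightarrow> (nat \<Rightarrow> nat) \<Rightarrow> (nat \<Rightarrow> nat) \<Rightarrow> (nat \<times> nat) set" where
  "skew_boxes m nu mu = {(i, j). 1 \<le> i \<and> i \<le> m \<and> mu i < j \<and> j \<le> nu i}"

definition symmetric_shape :: "(nat \<times> nat) set \<Rightarrow> bool" where
  "symmetric_shape S \<longleftrightarrow> (\<forall>i j. (i, j) \<in> S \<longrightarrow> (j, i) \<in> S)"

definition boxes_above_diag :: "(nat \<times> nat) set \<Rightarrow> (nat \<times> nat) set" where
  "boxes_above_diag S = {(i, j) \<in> S. i < j}"

text \<open>Linear extensions (standard Young tableaux) of a finite set of boxes S,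
  as bijections S \<rightarrow> {1..card S} increasing along the covering relations
  (right neighbour and lower neighbour); normalised to 0 outside S.\<close>
definition lin_ext :: "(nat \<times> nat) set \<Rightarrow> ((nat \<times> nat) \<Rightarrow> nat) set" where
  "lin_ext S = {T. bij_betw T S {1..card S} \<and> (\<forall>x. x \<notin> S \<longrightarrow> T x = 0) \<and>
      (\<forall>i j. (i, j) \<in> S \<longrightarrow> (i, Suc j) \<in> S \<longrightarrow> T (i, j) < T (i, Suc j)) \<and>
      (\<forall>i j. (i, j) \<in> S \<longrightarrow> (Suc i, j) \<in> S \<longrightarrow> T (i, j) < T (Suc i, j))}"

definition tab_perm :: "(nat \<times> nat) set \<Rightarrow> ((nat \<times> nat) \<Rightarrow> nat) \<Rightarrow> ((nat \<times> nat) \<Rightarrow> nat) \<Rightarrow> nat \<Rightarrow> nat" where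
  "tab_perm S T T0 k = (if k \<in> {1..card S} then T (inv_into S T0 k) else k)"

definition sign_imbalance :: "(nat \<times> nat) set \<Rightarrow> ((nat \<times> nat) \<Rightarrow> nat) \<Rightarrow> int" where
  "sign_imbalance S T0 = \<bar>\<Sum>T\<in>lin_ext S. sign (tab_perm S T T0)\<bar>"

end

theory Submission
  imports Defs
begin

definition rho :: "((nat \<times> nat) \<Rightarrow> nat) \<Rightarrow> (nat \<times> nat) set \<Rightarrow> (nat \<times> nat) set \<Rightarrow> nat \<Rightarrow> nat" where
  "rho T0 S A k = (if k \<in> T0 ` (A \<union> prod.swap ` A) then T0 (prod.swap (inv_into S T0 k)) else k)"

lemma rho_empty: "rho T0 S {} = id"
  by (auto simp: rho_def)

lemma rho_step:
  assumes inj: "inj_on T0 S" and sym: "\<And>x. x \<in> S \<Longrightarrow> prod.swap x \<in> S"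
    and aS: "a \<in> S" and alt: "fst a < snd a" and AS: "A \<subseteq> {x\<in>S. fst x < snd x}" and aA: "a \<notin> A"
  shows "rho T0 S (insert a A) = Transposition.transpose (T0 a) (T0 (prod.swap a)) \<circ> rho T0 S A"
proof
  fix k
  define B where "B = A \<union> prod.swap ` A"
  have BS: "B \<subseteq> S" using AS sym unfolding B_def by auto
  have Bsw: "\<And>b. b \<in> B \<Longrightarrow> prod.swap b \<in> B" unfolding B_def by auto
  have aB: "a \<notin> B" using aA alt AS unfolding B_def by (cases a) auto
  have saB: "prod.swap a \<notin> B" using aA alt AS unfolding B_def by (cases a) auto
  have saS: "prod.swap a \<in> S" using sym aS .
  have ne: "a \<noteq> prod.swap a" using alt by (cases a) auto
  have ins: "insert a A \<union> prod.swap ` insert a A = insert a (insert (prod.swap a) B)"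
    unfolding B_def by auto
  show "rho T0 S (insert a A) k = (Transposition.transpose (T0 a) (T0 (prod.swap a)) \<circ> rho T0 S A) k"
  proof (cases "k \<in> T0 ` B")
    case True
    then obtain b where b: "b \<in> B" "k = T0 b" by auto
    have bS: "b \<in> S" using b BS by auto
    have sb: "prod.swap b \<in> B" using Bsw b by auto
    have sbS: "prod.swap b \<in> S" using sb BS by auto
    have n1: "T0 (prod.swap b) \<noteq> T0 a" using inj sbS aS sb aB by (metis inj_on_eq_iff)
    have n2: "T0 (prod.swap b) \<noteq> T0 (prod.swap a)" using inj sbS saS sb saB by (metis inj_on_eq_iff)
    have "rho T0 S A k = T0 (prod.swap b)"
      unfolding rho_def using b bS inj by (auto simp: B_def[symmetric])
    moreover have "rho T0 S (insert a A) k = T0 (prod.swap b)"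
      unfolding rho_def ins using b bS inj by auto
    ultimately show ?thesis using n1 n2 by (simp add: Transposition.transpose_def)
  next
    case False
    have A1: "rho T0 S A k = k" unfolding rho_def using False by (simp add: B_def)
    show ?thesis
    proof (cases "k = T0 a")
      case True
      have "rho T0 S (insert a A) k = T0 (prod.swap a)"
        unfolding rho_def ins using True aS inj by auto
      then show ?thesis using A1 True by simp
    next
      case ka: False
      show ?thesis
      proof (cases "k = T0 (prod.swap a)")
        case True
        have "rho T0 S (insert a A) k = T0 a"
          unfolding rho_def ins using True saS inj by auto
        then show ?thesis using A1 True by simp
      next
        case False
        have "rho T0 S (insert a A) k = k"
          unfolding rho_def ins using False ka \<open>k \<notin> T0 ` B\<close> by auto
        then show ?thesis using A1 False ka by (simp add: Transposition.transpose_def)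
      qed
    qed
  qed
qed

lemma rho_sign:
  assumes inj: "inj_on T0 S" and sym: "\<And>x. x \<in> S \<Longrightarrow> prod.swap x \<in> S"
    and fin: "finite A" and AS: "A \<subseteq> {x\<in>S. fst x < snd x}"
  shows "permutation (rho T0 S A) \<and> sign (rho T0 S A) = (-1) ^ card A"
  using fin AS
proof (induction A rule: finite_induct)
  case empty
  then show ?case by (simp add: rho_empty permutation_id)
next
  case (insert a A)
  have aS: "a \<in> S" and alt: "fst a < snd a" using insert(4) by blast+
  have ne: "T0 a \<noteq> T0 (prod.swap a)"
  proof
    assume "T0 a = T0 (prod.swap a)"
    then have "a = prod.swap a" using inj_onD[OF inj _ aS sym[OF aS]] by blast
    then have "fst a = snd a" by (metis fst_swap)
    then show False using alt by simp
  qed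
  have eq: "rho T0 S (insert a A) = Transposition.transpose (T0 a) (T0 (prod.swap a)) \<circ> rho T0 S A"
    using rho_step[OF inj sym aS alt, of A] insert(2,4) by blast
  have IH: "permutation (rho T0 S A)" "sign (rho T0 S A) = (-1) ^ card A" using insert(3,4) by blast+
  have p: "permutation (Transposition.transpose (T0 a) (T0 (prod.swap a)) \<circ> rho T0 S A)"
    by (rule permutation_compose[OF permutation_swap_id IH(1)])
  have "sign (Transposition.transpose (T0 a) (T0 (prod.swap a)) \<circ> rho T0 S A)
      = - ((-1) ^ card A)"
    using sign_compose[OF permutation_swap_id IH(1)] ne IH(2) by (simp only: sign_swap_id if_False)
  also have "\<dots> = (-1) ^ card (insert a A)" using insert(1,2) by simp
  finally show ?case unfolding eq using p by (simp del: o_apply comp_apply)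
qed

lemma tab_perm_permutes:
  assumes T: "bij_betw T S {1..card S}" and T0: "bij_betw T0 S {1..card S}"
  shows "tab_perm S T T0 permutes {1..card S}"
proof (rule bij_imp_permutes)
  have "bij_betw (inv_into S T0) {1..card S} S" using T0 by (rule bij_betw_inv_into)
  then have "bij_betw (T \<circ> inv_into S T0) {1..card S} {1..card S}"
    using T by (rule bij_betw_trans)
  moreover have "bij_betw (tab_perm S T T0) {1..card S} {1..card S} = bij_betw (T \<circ> inv_into S T0) {1..card S} {1..card S}"
    by (rule bij_betw_cong) (simp add: tab_perm_def)
  ultimately show "bij_betw (tab_perm S T T0) {1..card S} {1..card S}" by simp
  show "\<And>x. x \<notin> {1..card S} \<Longrightarrow> tab_perm S T T0 x = x" unfolding tab_perm_def by auto
qed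

lemma tab_perm_swap:
  assumes T: "bij_betw T S {1..card S}" and T0: "bij_betw T0 S {1..card S}"
    and sym: "\<And>x. x \<in> S \<Longrightarrow> prod.swap x \<in> S"
  shows "tab_perm S (T \<circ> prod.swap) T0 = tab_perm S T T0 \<circ> rho T0 S {x\<in>S. fst x < snd x}"
proof
  fix k
  define A where "A = {x\<in>S. fst x < snd x}"
  have inj: "inj_on T0 S" using T0 bij_betw_def by auto
  have img: "T0 ` S = {1..card S}" using T0 by (rule bij_betw_imp_surj_on)
  have BS: "A \<union> prod.swap ` A \<subseteq> S" using sym unfolding A_def by auto
  have swS: "\<And>i j. (i, j) \<in> S \<Longrightarrow> (j, i) \<in> S" using sym by force
  show "tab_perm S (T \<circ> prod.swap) T0 k = (tab_perm S T T0 \<circ> rho T0 S {x\<in>S. fst x < snd x}) k"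
  proof (cases "k \<in> {1..card S}")
    case True
    then obtain x where x: "x \<in> S" "k = T0 x" using img by (metis imageE)
    have ix: "inv_into S T0 k = x" using x inj by auto
    show ?thesis
    proof (cases "fst x = snd x")
      case True
      have sx: "prod.swap x = x" using True by (cases x) auto
      have "x \<notin> A \<union> prod.swap ` A" unfolding A_def using True by auto
      then have "k \<notin> T0 ` (A \<union> prod.swap ` A)" using x inj BS
        by (metis inj_on_image_mem_iff)
      then have "rho T0 S A k = k" by (simp add: rho_def)
      then show ?thesis using \<open>k \<in> _\<close> ix sx by (simp add: tab_perm_def A_def[symmetric])
    next
      case False
      have "x \<in> A \<union> prod.swap ` A" unfolding A_def using False x
        by (cases x) (auto simp: image_iff intro: swS)
      then have r: "rho T0 S A k = T0 (prod.swap x)" using x ix by (simp add: rho_def)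
      have sxS: "prod.swap x \<in> S" using sym x by auto
      have "T0 (prod.swap x) \<in> {1..card S}" using sxS img by auto
      then show ?thesis using r True ix sxS inj by (simp add: tab_perm_def A_def[symmetric])
    qed
  next
    case False
    have "T0 ` (A \<union> prod.swap ` A) \<subseteq> {1..card S}" using BS img by (metis image_mono)
    then have "k \<notin> T0 ` (A \<union> prod.swap ` A)" using False by blast
    then have r: "rho T0 S A k = k" by (simp add: rho_def)
    have l1: "tab_perm S (T \<circ> prod.swap) T0 k = k" using False unfolding tab_perm_def by (simp only: if_False)
    have l2: "tab_perm S T T0 k = k" using False unfolding tab_perm_def by (simp only: if_False)
    show ?thesis using l1 l2 r by (simp add: A_def[symmetric])
  qed
qed

lemma lin_ext_swap:
  assumes T: "T \<in> lin_ext S" and sym: "\<And>x. x \<in> S \<Longrightarrow> prod.swap x \<in> S"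
  shows "T \<circ> prod.swap \<in> lin_ext S"
proof -
  have sw: "\<And>i j. (i, j) \<in> S \<Longrightarrow> (j, i) \<in> S" using sym by force
  have bs: "bij_betw prod.swap S S"
    by (rule bij_betw_byWitness[where f'=prod.swap]) (auto simp: image_iff intro: sw)
  have "bij_betw (T \<circ> prod.swap) S {1..card S}"
    using bs T by (auto simp: lin_ext_def intro: bij_betw_trans)
  moreover have "\<forall>x. x \<notin> S \<longrightarrow> (T \<circ> prod.swap) x = 0"
  proof (intro allI impI)
    fix x assume "x \<notin> S"
    then have "prod.swap x \<notin> S" using sym by (metis swap_swap)
    moreover obtain a b where ab: "prod.swap x = (a, b)" by (cases "prod.swap x")
    ultimately show "(T \<circ> prod.swap) x = 0" using T unfolding lin_ext_def by simp
  qed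
  moreover have "\<forall>i j. (i, j) \<in> S \<longrightarrow> (i, Suc j) \<in> S \<longrightarrow> (T \<circ> prod.swap) (i, j) < (T \<circ> prod.swap) (i, Suc j)"
  proof (intro allI impI)
    fix i j assume a: "(i, j) \<in> S" "(i, Suc j) \<in> S"
    have "(j, i) \<in> S" "(Suc j, i) \<in> S" using sw a by auto
    then show "(T \<circ> prod.swap) (i, j) < (T \<circ> prod.swap) (i, Suc j)" using T unfolding lin_ext_def by simp
  qed
  moreover have "\<forall>i j. (i, j) \<in> S \<longrightarrow> (Suc i, j) \<in> S \<longrightarrow> (T \<circ> prod.swap) (i, j) < (T \<circ> prod.swap) (Suc i, j)"
  proof (intro allI impI)
    fix i j assume a: "(i, j) \<in> S" "(Suc i, j) \<in> S"
    have "(j, i) \<in> S" "(j, Suc i) \<in> S" using sw a by auto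
    then show "(T \<circ> prod.swap) (i, j) < (T \<circ> prod.swap) (Suc i, j)" using T unfolding lin_ext_def by simp
  qed
  ultimately show ?thesis by (simp add: lin_ext_def)
qed

lemma main:
  assumes fin: "finite S" and sym: "\<And>x. x \<in> S \<Longrightarrow> prod.swap x \<in> S"
    and odd: "odd (card {x\<in>S. fst x < snd x})" and T0: "T0 \<in> lin_ext S"
  shows "sign_imbalance S T0 = 0"
proof -
  define A where "A = {x\<in>S. fst x < snd x}"
  define f where "f T = sign (tab_perm S T T0)" for T
  define g where "g T = T \<circ> prod.swap" for T :: "nat \<times> nat \<Rightarrow> nat"
  have T0b: "bij_betw T0 S {1..card S}" using T0 by (simp add: lin_ext_def)
  have inj: "inj_on T0 S" using T0b bij_betw_def by auto
  have finA: "finite A" using fin unfolding A_def by auto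
  have rs: "permutation (rho T0 S A) \<and> sign (rho T0 S A) = (-1) ^ card A"
    by (rule rho_sign[OF inj sym finA]) (auto simp: A_def)
  have sA: "sign (rho T0 S A) = -1" using rs odd by (simp add: A_def)
  have gg: "g (g T) = T" for T by (simp add: g_def comp_assoc[symmetric] fun_eq_iff)
  have gL: "g T \<in> lin_ext S" if "T \<in> lin_ext S" for T
    unfolding g_def by (rule lin_ext_swap[OF that sym])
  have bij: "bij_betw g (lin_ext S) (lin_ext S)"
    by (rule bij_betw_byWitness[where f'=g]) (use gg gL in auto)
  have fg: "f (g T) = - f T" if TL: "T \<in> lin_ext S" for T
  proof -
    have Tb: "bij_betw T S {1..card S}" using TL by (simp add: lin_ext_def)
    have p: "permutation (tab_perm S T T0)"
      by (rule permutes_imp_permutation[OF _ tab_perm_permutes[OF Tb T0b]]) simp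
    have "f (g T) = sign (tab_perm S T T0 \<circ> rho T0 S A)"
      unfolding f_def g_def A_def using tab_perm_swap[OF Tb T0b sym] by simp
    also have "\<dots> = f T * sign (rho T0 S A)"
      using p rs by (simp add: sign_compose f_def)
    finally show ?thesis using sA by simp
  qed
  have "(\<Sum>T\<in>lin_ext S. f T) = (\<Sum>T\<in>lin_ext S. f (g T))"
    using sum.reindex_bij_betw[OF bij, of f] by simp
  also have "\<dots> = - (\<Sum>T\<in>lin_ext S. f T)"
    using fg by (simp add: sum_negf[symmetric])
  finally have "(\<Sum>T\<in>lin_ext S. f T) = 0" by simp
  then show ?thesis by (simp add: sign_imbalance_def f_def)
qed

theorem lemma4p9:
  fixes m :: nat and lam mu :: "nat \<Rightarrow> nat"
  assumes "partition_in_box m lam"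
    and "partition_in_box m mu"
    and "part_subset m mu (part_compl m lam)"
    and "symmetric_shape (skew_boxes m (part_compl m lam) mu)"
    and "odd (card (boxes_above_diag (skew_boxes m (part_compl m lam) mu)))"
  shows "\<forall>T0\<in>lin_ext (skew_boxes m (part_compl m lam) mu).
           sign_imbalance (skew_boxes m (part_compl m lam) mu) T0 = 0"
proof
  fix T0
  assume T0: "T0 \<in> lin_ext (skew_boxes m (part_compl m lam) mu)"
  let ?S = "skew_boxes m (part_compl m lam) mu"
  have "?S \<subseteq> {1..m} \<times> {0..m}"
    by (auto simp: skew_boxes_def part_compl_def)
  then have fin: "finite ?S" by (rule finite_subset) auto
  have sym: "\<And>x. x \<in> ?S \<Longrightarrow> prod.swap x \<in> ?S"
    using assms(4) unfolding symmetric_shape_def by auto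
  have "boxes_above_diag ?S = {x\<in>?S. fst x < snd x}"
    by (auto simp: boxes_above_diag_def)
  then have odd: "odd (card {x\<in>?S. fst x < snd x})" using assms(5) by simp
  show "sign_imbalance ?S T0 = 0" by (rule main[OF fin sym odd T0])
qed

end
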